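(* Let $n\ge3$, let $h$ be a hermitian form on $\mathbb{C}^n$ of signature $(n-1,1)$ and $G(\mathbb{R})=\mathrm{SU}(n-1,1)$. Let $X^{ss}(\mathbb{R})$ be the set of semi-stable triples of $h$-isotropic lines and define $p([v_1],[v_2],[v_3])=u/|u|$ where $u=h(v_1,v_3)h(v_3,v_2)h(v_2,v_1)$. Then $p$ induces a homeomorphism of the separated quotient $X^{ss}(\mathbb{R})/G(\mathbb{R})$ onto $H=\{u\in\mathrm{U}(1):\mathrm{Re}(u)\le0\}$.
   Context: $h(v,w)$ is linear in $w$ and conjugate-linear in $v$. A triple of isotropic lines $(L_1,L_2,L_3)$ is semi-stable if the triple of flags $(L_i,L_i^\perp)$ is semi-stable for the diagonal $\mathrm{SL}_n(\mathbb{C})$-action on the cube of the variety of line-hyperplane flags, linearized via $(L_i,H_i)\mapsto(L_i,H_i^\perp)\in(\mathbb{P}(\mathbb{C}^n)\times\mathbb{P}((\mathbb{C}^n)^\vee))^3$ with $\bigotimes_i\mathrm{pr}_i^*(\mathcal{O}(1)\boxtimes\mathcal{O}(1))$; for isotropic lines this means the three lines are pairwise distinct, and then $u\ne0$ and $u/|u|$ does not depend on the generators $v_i$. The separated quotient $X^{ss}(\mathbb{R})/G(\mathbb{R})$ is the set of closed $G(\mathbb{R})$-orbits in $X^{ss}(\mathbb{R})$, each point being sent to the unique closed orbit in the closure of its orbit, with the quotient topology. *)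

theory Defs
  imports "HOL-Analysis.Analysis"
begin

definition hform :: "complex^'n^'n \<Rightarrow> complex^'n \<Rightarrow> complex^'n \<Rightarrow> complex" where
  "hform Hm v w = (\<Sum>i\<in>UNIV. \<Sum>j\<in>UNIV. cnj (v $ i) * (Hm $ i $ j) * (w $ j))"

definition hermitian_matrix :: "complex^'n^'n \<Rightarrow> bool" where
  "hermitian_matrix Hm \<longleftrightarrow> (\<forall>i j. Hm $ i $ j = cnj (Hm $ j $ i))"

definition signature_n1_1 :: "complex^'n^'n \<Rightarrow> bool" where
  "signature_n1_1 Hm \<longleftrightarrow> (\<exists>(e :: 'n \<Rightarrow> complex^'n) k. \<forall>i j.
      hform Hm (e i) (e j) = (if i = j then (if i = k then -1 else 1) else 0))"

definition SU_group :: "complex^'n^'n \<Rightarrow> (complex^'n^'n) set" where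
  "SU_group Hm = {g. det g = 1 \<and> (\<forall>v w. hform Hm (g *v v) (g *v w) = hform Hm v w)}"

definition cline :: "complex^'n \<Rightarrow> (complex^'n) set" where
  "cline v = (\<lambda>c. c *s v) ` UNIV"

definition quotient_topology :: "'a topology \<Rightarrow> ('a \<Rightarrow> 'b) \<Rightarrow> 'b set \<Rightarrow> 'b topology" where
  "quotient_topology X f Y = topology (\<lambda>U. U \<subseteq> Y \<and> openin X {x \<in> topspace X. f x \<in> U})"

definition proj_space :: "(complex^'n) set set" where
  "proj_space = {cline v | v. v \<noteq> 0}"

definition proj_top :: "(complex^'n) set topology" where
  "proj_top = quotient_topology (subtopology euclidean (UNIV - {0})) cline proj_space"

definition isotropic_line :: "complex^'n^'n \<Rightarrow> (complex^'n) set \<Rightarrow> bool" where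
  "isotropic_line Hm L \<longleftrightarrow> (\<exists>v. v \<noteq> 0 \<and> hform Hm v v = 0 \<and> L = cline v)"

text \<open>Semi-stable triples of isotropic lines: pairwise distinct (see context).\<close>
definition Xss :: "complex^'n^'n \<Rightarrow> ((complex^'n) set \<times> (complex^'n) set \<times> (complex^'n) set) set" where
  "Xss Hm = {(L1, L2, L3). isotropic_line Hm L1 \<and> isotropic_line Hm L2 \<and> isotropic_line Hm L3
              \<and> L1 \<noteq> L2 \<and> L1 \<noteq> L3 \<and> L2 \<noteq> L3}"

definition Xss_top :: "complex^'n^'n \<Rightarrow> ((complex^'n) set \<times> (complex^'n) set \<times> (complex^'n) set) topology" where
  "Xss_top Hm = subtopology (prod_topology proj_top (prod_topology proj_top proj_top)) (Xss Hm)"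

definition act_triple :: "complex^'n^'n \<Rightarrow> (complex^'n) set \<times> (complex^'n) set \<times> (complex^'n) set
    \<Rightarrow> (complex^'n) set \<times> (complex^'n) set \<times> (complex^'n) set" where
  "act_triple g x = (case x of (L1, L2, L3) \<Rightarrow>
      ((\<lambda>v. g *v v) ` L1, (\<lambda>v. g *v v) ` L2, (\<lambda>v. g *v v) ` L3))"

definition orbit :: "complex^'n^'n \<Rightarrow> (complex^'n) set \<times> (complex^'n) set \<times> (complex^'n) set
    \<Rightarrow> ((complex^'n) set \<times> (complex^'n) set \<times> (complex^'n) set) set" where
  "orbit Hm x = {act_triple g x | g. g \<in> SU_group Hm}"

text \<open>Closed orbits in X^ss(R) (the points of the separated quotient).\<close>
definition closed_orbits where
  "closed_orbits Hm = {orbit Hm x | x. x \<in> Xss Hm \<and> closedin (Xss_top Hm) (orbit Hm x)}"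

definition sep_proj where
  "sep_proj Hm x = (THE C. C \<in> closed_orbits Hm \<and> C \<subseteq> (Xss_top Hm) closure_of (orbit Hm x))"

definition sep_quotient_top where
  "sep_quotient_top Hm = quotient_topology (Xss_top Hm) (sep_proj Hm) (closed_orbits Hm)"

definition gen :: "(complex^'n) set \<Rightarrow> complex^'n" where
  "gen L = (SOME v. v \<in> L \<and> v \<noteq> 0)"

definition pinv :: "complex^'n^'n \<Rightarrow> (complex^'n) set \<times> (complex^'n) set \<times> (complex^'n) set \<Rightarrow> complex" where
  "pinv Hm x = (case x of (L1, L2, L3) \<Rightarrow>
     (let u = hform Hm (gen L1) (gen L3) * hform Hm (gen L3) (gen L2) * hform Hm (gen L2) (gen L1)
      in u / complex_of_real (cmod u)))"

definition Hset :: "complex set" where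
  "Hset = {u. cmod u = 1 \<and> Re u \<le> 0}"

end

theory Submission
  imports Defs
begin


lemma hform_add_right: "hform Hm v (w + w') = hform Hm v w + hform Hm v w'"
  unfolding hform_def by (simp add: distrib_left sum.distrib)
lemma hform_add_left: "hform Hm (v + v') w = hform Hm v w + hform Hm v' w"
  unfolding hform_def by (simp add: distrib_left distrib_right sum.distrib)
lemma hform_scale_right: "hform Hm v (c *s w) = c * hform Hm v w"
  unfolding hform_def by (simp add: sum_distrib_left mult.assoc mult.left_commute)
lemma hform_scale_left: "hform Hm (c *s v) w = cnj c * hform Hm v w"
  unfolding hform_def by (simp add: sum_distrib_left mult.assoc mult.left_commute)
lemma hform_zero_right[simp]: "hform Hm v 0 = 0"
  unfolding hform_def by simp
lemma hform_zero_left[simp]: "hform Hm 0 w = 0"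
  unfolding hform_def by simp
lemma hform_diff_right: "hform Hm v (w - w') = hform Hm v w - hform Hm v w'"
  unfolding hform_def by (simp add: right_diff_distrib sum_subtractf)
lemma hform_diff_left: "hform Hm (v - v') w = hform Hm v w - hform Hm v' w"
  unfolding hform_def by (simp add: left_diff_distrib right_diff_distrib sum_subtractf)
lemma hform_sum_right: "finite S \<Longrightarrow> hform Hm v (sum f S) = (\<Sum>x\<in>S. hform Hm v (f x))"
  by (induction S rule: finite_induct) (auto simp: hform_add_right)
lemma hform_sum_left: "finite S \<Longrightarrow> hform Hm (sum f S) w = (\<Sum>x\<in>S. hform Hm (f x) w)"
  by (induction S rule: finite_induct) (auto simp: hform_add_left)
lemma hform_herm: "hermitian_matrix Hm \<Longrightarrow> hform Hm w v = cnj (hform Hm v w)"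
proof -
  assume h: "hermitian_matrix Hm"
  have "cnj (hform Hm v w) = (\<Sum>i\<in>UNIV. \<Sum>j\<in>UNIV. v $ i * cnj (Hm $ i $ j) * cnj (w $ j))"
    unfolding hform_def by simp
  also have "\<dots> = (\<Sum>j\<in>UNIV. \<Sum>i\<in>UNIV. v $ i * cnj (Hm $ i $ j) * cnj (w $ j))"
    by (rule sum.swap)
  also have "\<dots> = hform Hm w v"
    unfolding hform_def
  proof (intro sum.cong refl)
    fix i j
    have "cnj (Hm $ i $ j) = Hm $ j $ i" using h unfolding hermitian_matrix_def by (metis complex_cnj_cnj)
    then show "v $ j * cnj (Hm $ j $ i) * cnj (w $ i) = cnj (w $ i) * Hm $ i $ j * v $ j"
      using h unfolding hermitian_matrix_def by (metis complex_cnj_cnj mult.commute mult.left_commute)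
  qed
  finally show ?thesis by simp
qed
lemma hform_self_real: "hermitian_matrix Hm \<Longrightarrow> hform Hm v v = of_real (Re (hform Hm v v))"
  using hform_herm[of Hm v v] by (metis Reals_cnj_iff complex_is_Real_iff of_real_Re)

lemmas hform_simps = hform_add_right hform_add_left hform_scale_right hform_scale_left
  hform_diff_right hform_diff_left


definition sg :: "'n \<Rightarrow> 'n \<Rightarrow> complex" where "sg k i = (if i = k then -1 else 1)"

lemma sg_sq[simp]: "sg k i * sg k i = 1" by (simp add: sg_def)
lemma cnj_sg[simp]: "cnj (sg k i) = sg k i" by (simp add: sg_def)
lemma sg_nz[simp]: "sg k i \<noteq> 0" by (simp add: sg_def)

definition orthframe :: "complex^'n^'n \<Rightarrow> 'n \<Rightarrow> ('n \<Rightarrow> complex^'n) \<Rightarrow> bool" where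
  "orthframe Hm k f \<longleftrightarrow> (\<forall>i j. hform Hm (f i) (f j) = (if i = j then sg k i else 0))"

lemma frame_gram:
  fixes f :: "'n \<Rightarrow> complex^'n"
  defines "E \<equiv> (\<chi> r c. f c $ r) :: complex^'n^'n"
  defines "A \<equiv> (\<chi> i r. cnj (f i $ r)) :: complex^'n^'n"
  shows "(A ** Hm ** E) $ i $ j = hform Hm (f i) (f j)"
proof -
  have "(A ** Hm ** E) $ i $ j = (\<Sum>s\<in>UNIV. (\<Sum>r\<in>UNIV. cnj (f i $ r) * Hm $ r $ s) * f j $ s)"
    by (simp add: matrix_matrix_mult_def A_def E_def)
  also have "\<dots> = (\<Sum>s\<in>UNIV. \<Sum>r\<in>UNIV. cnj (f i $ r) * Hm $ r $ s * f j $ s)"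
    by (simp add: sum_distrib_right)
  also have "\<dots> = hform Hm (f i) (f j)"
    unfolding hform_def by (rule sum.swap)
  finally show ?thesis .
qed

lemma frame_dets:
  fixes f :: "'n \<Rightarrow> complex^'n"
  assumes "orthframe Hm k f"
  shows "det ((\<chi> r c. f c $ r) :: complex^'n^'n) \<noteq> 0" "det Hm \<noteq> 0"
proof -
  define E where "E = ((\<chi> r c. f c $ r) :: complex^'n^'n)"
  define A where "A = ((\<chi> i r. cnj (f i $ r)) :: complex^'n^'n)"
  have G: "(A ** Hm ** E) $ i $ j = (if i = j then sg k i else 0)" for i j
    using frame_gram[of f Hm i j] assms unfolding orthframe_def A_def E_def by simp
  have "det (A ** Hm ** E) = (\<Prod>i\<in>UNIV. sg k i)"
    by (subst det_diagonal) (auto simp: G)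
  also have "\<dots> \<noteq> 0" by (simp add: prod_zero_iff)
  finally have "det A * det Hm * det E \<noteq> 0" by (simp add: det_mul)
  then show "det ((\<chi> r c. f c $ r) :: complex^'n^'n) \<noteq> 0" "det Hm \<noteq> 0"
    by (auto simp: E_def)
qed

lemma matrix_columns_mult:
  "((\<chi> r c. f c $ r) :: complex^'n^'n) *v y = (\<Sum>c\<in>UNIV. (y $ c) *s f c)"
  by (simp add: vec_eq_iff matrix_vector_mult_def sum_component mult.commute)

lemma frame_expand:
  fixes f :: "'n \<Rightarrow> complex^'n"
  assumes fr: "orthframe Hm k f"
  shows "w = (\<Sum>i\<in>UNIV. (sg k i * hform Hm (f i) w) *s f i)"
proof -
  define E where "E = ((\<chi> r c. f c $ r) :: complex^'n^'n)"
  have "invertible E" using frame_dets(1)[OF fr] invertible_det_nz E_def by blast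
  then obtain B where B: "E ** B = mat 1" using invertible_right_inverse by blast
  define y where "y = B *v w"
  have wy: "w = (\<Sum>c\<in>UNIV. (y $ c) *s f c)"
    by (metis B E_def matrix_columns_mult matrix_vector_mul_assoc matrix_vector_mul_lid y_def)
  have "hform Hm (f i) w = y $ i * sg k i" for i
  proof -
    have "hform Hm (f i) w = (\<Sum>c\<in>UNIV. y $ c * hform Hm (f i) (f c))"
      by (subst wy) (simp add: hform_sum_right hform_scale_right)
    also have "\<dots> = (\<Sum>c\<in>UNIV. if c = i then y $ c * sg k i else 0)"
      using fr unfolding orthframe_def by (intro sum.cong) auto
    finally show ?thesis by simp
  qed
  then have "y $ i = sg k i * hform Hm (f i) w" for i
    by (simp add: mult.assoc[symmetric])
  then have "(\<Sum>c\<in>UNIV. (y $ c) *s f c) = (\<Sum>i\<in>UNIV. (sg k i * hform Hm (f i) w) *s f i)"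
    by simp
  then show ?thesis using wy by metis
qed

lemma frame_hform:
  assumes fr: "orthframe Hm k f"
  shows "hform Hm v w = (\<Sum>i\<in>UNIV. sg k i * cnj (hform Hm (f i) v) * hform Hm (f i) w)"
proof -
  have "hform Hm v w = hform Hm (\<Sum>i\<in>UNIV. (sg k i * hform Hm (f i) v) *s f i) w"
    using frame_expand[OF fr, of v] by simp
  also have "\<dots> = (\<Sum>i\<in>UNIV. sg k i * cnj (hform Hm (f i) v) * hform Hm (f i) w)"
    by (simp add: hform_sum_left hform_scale_left mult.assoc)
  finally show ?thesis .
qed

lemma frame_zero:
  assumes fr: "orthframe Hm k f" and "\<And>i. hform Hm (f i) w = 0"
  shows "w = 0"
  using frame_expand[OF fr, of w] assms(2) by simp

lemma pos_lemma:
  assumes fr: "orthframe Hm k e" and hk: "hform Hm (e k) y = 0" and y: "y \<noteq> 0"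
  shows "Re (hform Hm y y) > 0"
proof -
  have eq: "Re (hform Hm y y) = (\<Sum>i\<in>UNIV. (if i = k then 0 else (cmod (hform Hm (e i) y))\<^sup>2))"
    unfolding frame_hform[OF fr, of y y] Re_sum
    by (intro sum.cong refl) (auto simp: sg_def hk complex_mult_cnj simp del: complex_cnj_mult, metis cmod_power2 power2_eq_square)
  obtain i where i: "hform Hm (e i) y \<noteq> 0" using frame_zero[OF fr] y by blast
  then have ik: "i \<noteq> k" using hk by auto
  show ?thesis unfolding eq
    by (rule sum_pos2[of _ i]) (use i ik in auto)
qed


lemma cnj_mult_self: "cnj b * b = complex_of_real ((cmod b)\<^sup>2)"
  by (metis complex_norm_square mult.commute)

lemma neg_orth_pos:
  assumes fr: "orthframe Hm k e" and herm: "hermitian_matrix Hm"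
    and hf: "hform Hm f f = -1" and hfz: "hform Hm f z = 0" and z: "z \<noteq> 0"
  shows "Re (hform Hm z z) > 0"
proof -
  have hzf: "hform Hm z f = 0" using hform_herm[OF herm, of z f] hfz by simp
  define a where "a = hform Hm (e k) z"
  define b where "b = - hform Hm (e k) f"
  have b: "b \<noteq> 0"
  proof
    assume "b = 0"
    then have "hform Hm (e k) f = 0" by (simp add: b_def)
    moreover have "f \<noteq> 0" using hf by auto
    ultimately have "Re (hform Hm f f) > 0" using pos_lemma[OF fr] by blast
    then show False using hf by simp
  qed
  define y where "y = a *s f + b *s z"
  have hy: "hform Hm (e k) y = 0"
    by (simp add: y_def hform_simps a_def b_def)
  have y: "y \<noteq> 0"
  proof
    assume y0: "y = 0"
    have "hform Hm f y = - a" by (simp add: y_def hform_simps hf hfz)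
    then have "a = 0" using y0 by simp
    then have "b *s z = 0" using y0 by (simp add: y_def)
    then show False using b z by (simp add: vec_eq_iff)
  qed
  have "Re (hform Hm y y) > 0" using pos_lemma[OF fr hy y] .
  moreover have "hform Hm y y = - (cnj a * a) + cnj b * b * hform Hm z z"
    by (simp add: y_def hform_simps hf hfz hzf algebra_simps)
  ultimately have "0 < - (cmod a)\<^sup>2 + (cmod b)\<^sup>2 * Re (hform Hm z z)"
    by (simp add: cnj_mult_self)
  moreover have "(cmod b)\<^sup>2 > 0" using b by simp
  ultimately show ?thesis
  proof -
    assume A: "0 < - (cmod a)\<^sup>2 + (cmod b)\<^sup>2 * Re (hform Hm z z)" and B: "(cmod b)\<^sup>2 > 0"
    show ?thesis
    proof (rule ccontr)
      assume "\<not> ?thesis"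
      then have "(cmod b)\<^sup>2 * Re (hform Hm z z) \<le> 0" using B by (simp add: mult_nonneg_nonpos)
      moreover have "(cmod a)\<^sup>2 \<ge> 0" by simp
      ultimately show False using A by linarith
    qed
  qed
qed

lemma iso_orth:
  assumes fr: "orthframe Hm k e" and herm: "hermitian_matrix Hm"
    and v: "v \<noteq> 0" and hv: "hform Hm v v = 0" and hw: "hform Hm w w = 0" and hvw: "hform Hm v w = 0"
  shows "\<exists>c. w = c *s v"
proof -
  have hwv: "hform Hm w v = 0" using hform_herm[OF herm, of w v] hvw by simp
  define a where "a = hform Hm (e k) w"
  define b where "b = - hform Hm (e k) v"
  have b: "b \<noteq> 0"
  proof
    assume "b = 0"
    then have "hform Hm (e k) v = 0" by (simp add: b_def)
    then have "Re (hform Hm v v) > 0" using pos_lemma[OF fr _ v] by blast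
    then show False using hv by simp
  qed
  define y where "y = a *s v + b *s w"
  have hy: "hform Hm (e k) y = 0"
    by (simp add: y_def hform_simps a_def b_def)
  have "hform Hm y y = 0"
    by (simp add: y_def hform_simps hv hw hvw hwv)
  then have "y = 0"
  proof -
    assume h0: "hform Hm y y = 0"
    show "y = 0"
    proof (rule ccontr)
      assume "y \<noteq> 0"
      then have "Re (hform Hm y y) > 0" using pos_lemma[OF fr hy] by blast
      then show False using h0 by simp
    qed
  qed
  then have "w = (- a / b) *s v"
    using b by (simp add: y_def vec_eq_iff field_simps) (metis add_eq_0_iff mult.commute)
  then show ?thesis by blast
qed

lemma cline_eq_iff:
  assumes "v \<noteq> 0"
  shows "cline v = cline w \<longleftrightarrow> (\<exists>c. c \<noteq> 0 \<and> w = c *s v)"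
proof
  assume h: "cline v = cline w"
  have "w \<in> cline w" unfolding cline_def by (rule image_eqI[of _ _ 1]) auto
  then obtain c where c: "w = c *s v" using h unfolding cline_def by auto
  have "v \<in> cline v" unfolding cline_def by (rule image_eqI[of _ _ 1]) auto
  then obtain d where "v = d *s w" using h unfolding cline_def by auto
  then have "c \<noteq> 0" using c assms by auto
  then show "\<exists>c. c \<noteq> 0 \<and> w = c *s v" using c by blast
next
  assume "\<exists>c. c \<noteq> 0 \<and> w = c *s v"
  then obtain c where c: "c \<noteq> 0" "w = c *s v" by blast
  show "cline v = cline w"
    unfolding cline_def
  proof (intro set_eqI iffI)
    fix x assume "x \<in> range (\<lambda>d. d *s v)"
    then obtain d where "x = d *s v" by auto
    then have "x = (d / c) *s w" using c by (simp add: vec_eq_iff)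
    then show "x \<in> range (\<lambda>d. d *s w)" by blast
  next
    fix x assume "x \<in> range (\<lambda>d. d *s w)"
    then obtain d where "x = d *s w" by auto
    then have "x = (d * c) *s v" using c by (simp add: vec_eq_iff)
    then show "x \<in> range (\<lambda>d. d *s v)" by blast
  qed
qed


lemma span_not_univ:
  fixes F :: "'n \<Rightarrow> complex^'n" and S :: "'n set"
  assumes "S \<noteq> UNIV"
  shows "\<exists>y. y \<notin> vec.span (F ` S)"
proof (rule ccontr)
  assume "\<not> ?thesis"
  then have "UNIV \<subseteq> vec.span (F ` S)" by auto
  then have "vec.dim (UNIV :: (complex^'n) set) \<le> card (F ` S)"
    by (intro vec.dim_le_card) auto
  also have "\<dots> \<le> card S" by (rule card_image_le) simp
  also have "\<dots> < CARD('n)" using assms by (intro psubset_card_mono) auto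
  finally show False by (simp add: card_cart_basis)
qed

lemma frame_extend_step:
  assumes herm: "hermitian_matrix Hm" and fe: "orthframe Hm k e" and kS: "k \<in> S"
    and FS: "\<forall>i\<in>S. \<forall>j\<in>S. hform Hm (F i) (F j) = (if i = j then sg k i else 0)"
    and i: "i \<notin> S"
  shows "\<exists>v. hform Hm v v = 1 \<and> (\<forall>j\<in>S. hform Hm (F j) v = 0)"
proof -
  obtain y where y: "y \<notin> vec.span (F ` S)" using span_not_univ[of S F] i by blast
  define z where "z = y - (\<Sum>j\<in>S. (sg k j * hform Hm (F j) y) *s F j)"
  have z0: "z \<noteq> 0"
  proof
    assume "z = 0"
    then have "y = (\<Sum>j\<in>S. (sg k j * hform Hm (F j) y) *s F j)" by (simp add: z_def)
    also have "\<dots> \<in> vec.span (F ` S)"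
      by (intro vec.span_sum vec.span_scale vec.span_base) auto
    finally show False using y by simp
  qed
  have orth: "hform Hm (F j) z = 0" if j: "j \<in> S" for j
  proof -
    have "hform Hm (F j) (\<Sum>j\<in>S. (sg k j * hform Hm (F j) y) *s F j)
        = (\<Sum>l\<in>S. sg k l * hform Hm (F l) y * hform Hm (F j) (F l))"
      by (simp add: hform_sum_right hform_scale_right)
    also have "\<dots> = (\<Sum>l\<in>S. if l = j then hform Hm (F j) y else 0)"
      using FS j by (intro sum.cong refl) (auto simp: mult.commute mult.left_commute)
    also have "\<dots> = hform Hm (F j) y" using j by simp
    finally show ?thesis by (simp add: z_def hform_diff_right)
  qed
  have "hform Hm (F k) (F k) = -1" using FS kS by (simp add: sg_def)
  then have pos: "Re (hform Hm z z) > 0" using neg_orth_pos[OF fe herm _ orth[OF kS] z0] by blast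
  define r where "r = Re (hform Hm z z)"
  have zz: "hform Hm z z = complex_of_real r" using hform_self_real[OF herm] r_def by blast
  define v where "v = complex_of_real (1 / sqrt r) *s z"
  have "hform Hm v v = complex_of_real (1 / sqrt r) * complex_of_real (1 / sqrt r) * complex_of_real r"
    by (simp add: v_def hform_simps zz)
  also have "\<dots> = 1" using pos r_def
    by (simp flip: of_real_mult)
  finally have "hform Hm v v = 1" .
  moreover have "\<forall>j\<in>S. hform Hm (F j) v = 0" by (simp add: v_def hform_simps orth)
  ultimately show ?thesis by blast
qed

lemma frame_extend:
  assumes herm: "hermitian_matrix Hm" and fe: "orthframe Hm k e"
  shows "k \<in> S \<Longrightarrow> \<forall>i\<in>S. \<forall>j\<in>S. hform Hm (F i) (F j) = (if i = j then sg k i else 0)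
    \<Longrightarrow> \<exists>F'. (\<forall>i\<in>S. F' i = F i) \<and> orthframe Hm k F'"
proof (induction "card (UNIV - S)" arbitrary: S F rule: less_induct)
  case less
  show ?case
  proof (cases "S = UNIV")
    case True
    then show ?thesis using less.prems unfolding orthframe_def by auto
  next
    case False
    then obtain i where i: "i \<notin> S" by blast
    obtain v where v: "hform Hm v v = 1" "\<forall>j\<in>S. hform Hm (F j) v = 0"
      using frame_extend_step[OF herm fe less.prems i] by blast
    define G where "G = F(i := v)"
    have ik: "i \<noteq> k" using i less.prems(1) by auto
    have G: "\<forall>a\<in>insert i S. \<forall>b\<in>insert i S. hform Hm (G a) (G b) = (if a = b then sg k a else 0)"
    proof (intro ballI)
      fix a b assume a: "a \<in> insert i S" and b: "b \<in> insert i S"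
      show "hform Hm (G a) (G b) = (if a = b then sg k a else 0)"
      proof (cases "a = i"; cases "b = i")
        assume "a = i" "b = i" then show ?thesis using v ik by (simp add: G_def sg_def)
      next
        assume "a = i" "b \<noteq> i"
        then have "b \<in> S" using b by auto
        then show ?thesis using v \<open>a = i\<close> \<open>b \<noteq> i\<close> hform_herm[OF herm, of v "F b"] by (simp add: G_def)
      next
        assume "a \<noteq> i" "b = i"
        then have "a \<in> S" using a by auto
        then show ?thesis using v \<open>a \<noteq> i\<close> \<open>b = i\<close> by (simp add: G_def)
      next
        assume "a \<noteq> i" "b \<noteq> i"
        then show ?thesis using a b less.prems(2) by (simp add: G_def)
      qed
    qed
    have "card (UNIV - insert i S) < card (UNIV - S)"
      using i by (intro psubset_card_mono) auto
    then obtain F' where F': "\<forall>a\<in>insert i S. F' a = G a" "orthframe Hm k F'"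
      using less.hyps[OF _ _ G] less.prems(1) by blast
    have "\<forall>a\<in>S. F' a = F a" using F'(1) i unfolding G_def by (metis fun_upd_other insertCI)
    then show ?thesis using F'(2) by blast
  qed
qed


lemma det_cnj: "det ((\<chi> i j. cnj (A $ i $ j)) :: complex^'n^'n) = cnj (det A)"
  unfolding det_def by simp

lemma mult_if10: "(x::complex) * (if P then 1 else 0) = (if P then x else 0)" by simp
lemma hform_axis: "hform Hm (axis i 1) (axis j 1) = Hm $ i $ j"
proof -
  have "hform Hm (axis i 1) (axis j 1) = (\<Sum>a\<in>UNIV. if a = i then (\<Sum>b\<in>UNIV. if b = j then Hm $ a $ b else 0) else 0)"
    unfolding hform_def
  proof (intro sum.cong refl)
    fix a show "(\<Sum>b\<in>UNIV. cnj (axis i 1 $ a) * Hm $ a $ b * axis j 1 $ b) =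
         (if a = i then \<Sum>b\<in>UNIV. if b = j then Hm $ a $ b else 0 else 0)"
      by (cases "a = i") (auto simp: axis_def mult_if10 intro!: sum.cong)
  qed
  also have "\<dots> = Hm $ i $ j" by simp
  finally show ?thesis .
qed

lemma mat_vec_axis: "(g :: complex^'n^'n) *v axis j 1 = (\<chi> r. g $ r $ j)"
  by (simp add: vec_eq_iff matrix_vector_mult_def axis_def if_distrib cong: if_cong)

lemma unit_det:
  fixes g :: "complex^'n^'n"
  assumes dH: "det Hm \<noteq> 0" and pres: "\<forall>v w. hform Hm (g *v v) (g *v w) = hform Hm v w"
  shows "cmod (det g) = 1"
proof -
  define f where "f = (\<lambda>i. g *v axis i 1)"
  have E: "((\<chi> r c. f c $ r) :: complex^'n^'n) = g" by (simp add: f_def mat_vec_axis vec_eq_iff)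
  have A: "((\<chi> i r. cnj (f i $ r)) :: complex^'n^'n) = transpose (\<chi> i j. cnj (g $ i $ j))"
    by (simp add: f_def mat_vec_axis vec_eq_iff transpose_def)
  have "(transpose (\<chi> i j. cnj (g $ i $ j)) ** Hm ** g) $ i $ j = Hm $ i $ j" for i j
    using frame_gram[of f Hm i j] unfolding E A by (simp add: f_def pres hform_axis)
  then have "transpose (\<chi> i j. cnj (g $ i $ j)) ** Hm ** g = Hm" by (simp add: vec_eq_iff)
  then have "cnj (det g) * det Hm * det g = det Hm"
    by (metis det_mul det_transpose det_cnj)
  then have "cnj (det g) * det g = 1" using dH
    by (metis mult.commute mult.left_commute mult_cancel_right1)
  then have "(cmod (det g))\<^sup>2 = 1"
    by (metis cnj_mult_self of_real_eq_1_iff)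
  then show ?thesis using norm_ge_zero[of "det g"] by (auto simp: power2_eq_1_iff)
qed

lemma frame_map:
  fixes Hm :: "complex^'n^'n"
  assumes herm: "hermitian_matrix Hm" and fe: "orthframe Hm k e" and fF: "orthframe Hm k F"
  shows "\<exists>g :: complex^'n^'n. (\<forall>v w. hform Hm (g *v v) (g *v w) = hform Hm v w) \<and> (\<forall>i. g *v F i = e i)"
proof -
  define g where "g = ((\<chi> r c. \<Sum>i\<in>UNIV. sg k i * e i $ r * (\<Sum>s\<in>UNIV. cnj (F i $ s) * Hm $ s $ c)) :: complex^'n^'n)"
  have gw: "g *v w = (\<Sum>i\<in>UNIV. (sg k i * hform Hm (F i) w) *s e i)" for w
  proof -
    have "(g *v w) $ r = (\<Sum>i\<in>UNIV. sg k i * hform Hm (F i) w * e i $ r)" for r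
    proof -
      have "(g *v w) $ r = (\<Sum>c\<in>UNIV. \<Sum>i\<in>UNIV. \<Sum>s\<in>UNIV. sg k i * e i $ r * (cnj (F i $ s) * Hm $ s $ c) * w $ c)"
        by (simp add: g_def matrix_vector_mult_def sum_distrib_left sum_distrib_right)
      also have "\<dots> = (\<Sum>i\<in>UNIV. \<Sum>c\<in>UNIV. \<Sum>s\<in>UNIV. sg k i * e i $ r * (cnj (F i $ s) * Hm $ s $ c) * w $ c)"
        by (rule sum.swap)
      also have "\<dots> = (\<Sum>i\<in>UNIV. \<Sum>s\<in>UNIV. \<Sum>c\<in>UNIV. sg k i * e i $ r * (cnj (F i $ s) * Hm $ s $ c) * w $ c)"
        by (intro sum.cong refl sum.swap)
      also have "\<dots> = (\<Sum>i\<in>UNIV. sg k i * hform Hm (F i) w * e i $ r)"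
        unfolding hform_def by (simp add: sum_distrib_left sum_distrib_right mult_ac)
      finally show ?thesis .
    qed
    then show ?thesis by (simp add: vec_eq_iff sum_component mult_ac)
  qed
  have ce: "hform Hm (e j) (g *v w) = hform Hm (F j) w" for j w
  proof -
    have "hform Hm (e j) (g *v w) = (\<Sum>i\<in>UNIV. sg k i * hform Hm (F i) w * hform Hm (e j) (e i))"
      by (simp add: gw hform_sum_right hform_scale_right)
    also have "\<dots> = (\<Sum>i\<in>UNIV. if i = j then hform Hm (F j) w else 0)"
    proof (intro sum.cong refl)
      fix i
      have "hform Hm (e j) (e i) = (if j = i then sg k j else 0)" using fe unfolding orthframe_def by blast
      then show "sg k i * hform Hm (F i) w * hform Hm (e j) (e i) = (if i = j then hform Hm (F j) w else 0)"
        by (auto simp: mult.commute mult.left_commute)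
    qed
    finally show ?thesis by simp
  qed
  have pres: "hform Hm (g *v v) (g *v w) = hform Hm v w" for v w
  proof -
    have "hform Hm (g *v v) (g *v w) = (\<Sum>i\<in>UNIV. sg k i * cnj (hform Hm (e i) (g *v v)) * hform Hm (e i) (g *v w))"
      by (rule frame_hform[OF fe])
    also have "\<dots> = (\<Sum>i\<in>UNIV. sg k i * cnj (hform Hm (F i) v) * hform Hm (F i) w)"
      by (simp only: ce)
    also have "\<dots> = hform Hm v w" by (rule frame_hform[OF fF, symmetric])
    finally show ?thesis .
  qed
  have "g *v F j = e j" for j
  proof -
    have "g *v F j = (\<Sum>i\<in>UNIV. (sg k i * hform Hm (F i) (F j)) *s e i)" by (rule gw)
    also have "\<dots> = (\<Sum>i\<in>UNIV. (if i = j then e j else 0))"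
    proof (intro sum.cong refl)
      fix i
      have "hform Hm (F i) (F j) = (if i = j then sg k i else 0)" using fF unfolding orthframe_def by blast
      then show "(sg k i * hform Hm (F i) (F j)) *s e i = (if i = j then e j else 0)" by simp
    qed
    finally show ?thesis by simp
  qed
  then show ?thesis using pres by blast
qed

lemma SU_from_frame:
  fixes Hm :: "complex^'n^'n"
  assumes herm: "hermitian_matrix Hm" and fe: "orthframe Hm k e" and fF: "orthframe Hm k F"
  shows "\<exists>g\<in>SU_group Hm. \<exists>c. c \<noteq> 0 \<and> (\<forall>i. g *v F i = c *s e i)"
proof -
  obtain g :: "complex^'n^'n" where pres: "\<forall>v w. hform Hm (g *v v) (g *v w) = hform Hm v w"
    and gF: "\<forall>i. g *v F i = e i" using frame_map[OF herm fe fF] by blast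
  have ud: "cmod (det g) = 1" using unit_det[OF frame_dets(2)[OF fe] pres] .
  then have d0: "det g \<noteq> 0" by auto
  define c where "c = exp (- Ln (det g) / of_nat CARD('n))"
  have cn: "c ^ CARD('n) = inverse (det g)"
  proof -
    have "c ^ CARD('n) = exp (of_nat CARD('n) * (- Ln (det g) / of_nat CARD('n)))"
      unfolding c_def by (rule exp_of_nat_mult[symmetric])
    also have "\<dots> = exp (- Ln (det g))" by simp
    also have "\<dots> = inverse (det g)" using d0 by (simp add: exp_minus)
    finally show ?thesis .
  qed
  have cm: "cmod c = 1" using ud d0 by (simp add: c_def)
  then have c0: "c \<noteq> 0" by auto
  define g' where "g' = mat c ** g"
  have matc: "(mat c :: complex^'n^'n) *v x = c *s x" for x
    by (simp add: vec_eq_iff matrix_vector_mult_def mat_def if_distrib if_distribR cong: if_cong)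
  have g'v: "g' *v v = c *s (g *v v)" for v
    by (simp add: g'_def matrix_vector_mul_assoc[symmetric] matc)
  have "det (mat c :: complex^'n^'n) = c ^ CARD('n)"
    by (subst det_diagonal) (auto simp: mat_def)
  then have "det g' = 1" using d0 by (simp add: g'_def det_mul cn)
  moreover have "hform Hm (g' *v v) (g' *v w) = hform Hm v w" for v w
  proof -
    have "cnj c * c = 1" using cm by (simp add: cnj_mult_self)
    then have "c * cnj c = 1" by (simp add: mult.commute)
    then show ?thesis using pres by (simp add: g'v hform_simps mult.assoc[symmetric])
  qed
  ultimately have "g' \<in> SU_group Hm" by (simp add: SU_group_def)
  moreover have "\<forall>i. g' *v F i = c *s e i" by (simp add: g'v gF)
  ultimately show ?thesis using c0 by blast
qed


lemma mv_scale: "(g :: complex^'n^'m) *v (c *s x) = c *s (g *v x)"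
  by (simp add: vec_eq_iff matrix_vector_mult_def sum_distrib_left mult.left_commute)
lemma mv_add: "(g :: complex^'n^'m) *v (x + y) = g *v x + g *v y"
  by (simp add: matrix_vector_right_distrib)
lemma mv_diff: "(g :: complex^'n^'m) *v (x - y) = g *v x - g *v y"
  by (simp add: vec_eq_iff matrix_vector_mult_def sum_subtractf right_diff_distrib)

lemma in_cline: "v \<in> cline v"
  unfolding cline_def by (rule image_eqI[of _ _ 1]) auto

lemma cline_scale: "c \<noteq> 0 \<Longrightarrow> cline (c *s v) = cline v"
proof (cases "v = 0")
  case True then show ?thesis by simp
next
  case False
  assume "c \<noteq> 0"
  then show ?thesis using cline_eq_iff[OF False, of "c *s v"] by metis
qed

lemma img_cline: "(\<lambda>v. (g :: complex^'n^'n) *v v) ` cline w = cline (g *v w)"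
  unfolding cline_def by (auto simp: mv_scale image_iff)

lemma gen_iso:
  assumes "isotropic_line Hm L"
  shows "gen L \<noteq> 0 \<and> hform Hm (gen L) (gen L) = 0 \<and> L = cline (gen L)"
proof -
  obtain v where v: "v \<noteq> 0" "hform Hm v v = 0" "L = cline v"
    using assms unfolding isotropic_line_def by blast
  have "\<exists>w. w \<in> L \<and> w \<noteq> 0" using v in_cline by blast
  then have g: "gen L \<in> L" "gen L \<noteq> 0" unfolding gen_def by (metis (mono_tags, lifting) someI_ex)+
  then obtain c where c: "gen L = c *s v" using v(3) unfolding cline_def by auto
  then have c0: "c \<noteq> 0" using g(2) by auto
  have "hform Hm (gen L) (gen L) = 0" by (simp add: c hform_simps v(2))
  moreover have "L = cline (gen L)" using c c0 v(3) cline_scale by metis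
  ultimately show ?thesis using g by blast
qed

lemma iso_line_neq:
  assumes "v \<noteq> 0" "hform Hm v v = 0" "hform Hm v w \<noteq> 0"
  shows "cline v \<noteq> cline w"
proof
  assume "cline v = cline w"
  then obtain c where "w = c *s v" using cline_eq_iff[OF assms(1)] by blast
  then show False using assms by (simp add: hform_simps)
qed

definition pvec :: "complex^'n^'n \<Rightarrow> complex^'n \<Rightarrow> complex^'n \<Rightarrow> complex^'n \<Rightarrow> complex" where
  "pvec Hm v1 v2 v3 = (let u = hform Hm v1 v3 * hform Hm v3 v2 * hform Hm v2 v1 in u / complex_of_real (cmod u))"

lemma pvec_scale:
  assumes "c1 \<noteq> 0" "c2 \<noteq> 0" "c3 \<noteq> 0"
  shows "pvec Hm (c1 *s v1) (c2 *s v2) (c3 *s v3) = pvec Hm v1 v2 v3"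
proof -
  define u where "u = hform Hm v1 v3 * hform Hm v3 v2 * hform Hm v2 v1"
  define t where "t = (cmod c1)\<^sup>2 * (cmod c2)\<^sup>2 * (cmod c3)\<^sup>2"
  have t: "t > 0" using assms by (simp add: t_def)
  have "hform Hm (c1 *s v1) (c3 *s v3) * hform Hm (c3 *s v3) (c2 *s v2) * hform Hm (c2 *s v2) (c1 *s v1)
      = (cnj c1 * c1) * (cnj c2 * c2) * (cnj c3 * c3) * u"
    by (simp add: hform_simps u_def mult_ac)
  also have "\<dots> = complex_of_real t * u" by (simp add: cnj_mult_self t_def)
  finally have eq: "hform Hm (c1 *s v1) (c3 *s v3) * hform Hm (c3 *s v3) (c2 *s v2) * hform Hm (c2 *s v2) (c1 *s v1)
      = complex_of_real t * u" .
  have "complex_of_real t * u / complex_of_real (cmod (complex_of_real t * u)) = u / complex_of_real (cmod u)"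
    using t by (simp add: norm_mult)
  then show ?thesis unfolding pvec_def Let_def eq u_def by simp
qed

lemma pinv_lines:
  assumes "x = (cline v1, cline v2, cline v3)" and L: "isotropic_line Hm (cline v1)"
    "isotropic_line Hm (cline v2)" "isotropic_line Hm (cline v3)"
    and v: "v1 \<noteq> 0" "v2 \<noteq> 0" "v3 \<noteq> 0"
  shows "pinv Hm x = pvec Hm v1 v2 v3"
proof -
  have "\<exists>c. c \<noteq> 0 \<and> gen (cline v) = c *s v" if "isotropic_line Hm (cline v)" "v \<noteq> 0" for v
    using gen_iso[OF that(1)] cline_eq_iff[OF that(2)] by metis
  then obtain c1 c2 c3 where c: "c1 \<noteq> 0" "gen (cline v1) = c1 *s v1" "c2 \<noteq> 0" "gen (cline v2) = c2 *s v2"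
    "c3 \<noteq> 0" "gen (cline v3) = c3 *s v3" using L v by metis
  have "pinv Hm x = pvec Hm (gen (cline v1)) (gen (cline v2)) (gen (cline v3))"
    unfolding assms(1) pinv_def pvec_def by simp
  also have "\<dots> = pvec Hm v1 v2 v3" using c pvec_scale by simp
  finally show ?thesis .
qed


definition tri :: "('n \<Rightarrow> complex^'n) \<Rightarrow> 'n \<Rightarrow> 'n \<Rightarrow> 'n \<Rightarrow> complex \<Rightarrow> complex \<Rightarrow> complex \<Rightarrow> complex^'n" where
  "tri F k a b x1 x2 x3 = x1 *s F k + x2 *s F a + x3 *s F b"

lemma tri_h:
  assumes fr: "orthframe Hm k F" and d: "a \<noteq> k" "b \<noteq> k" "a \<noteq> b"
  shows "hform Hm (tri F k a b x1 x2 x3) (tri F k a b y1 y2 y3) = - cnj x1 * y1 + cnj x2 * y2 + cnj x3 * y3"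
proof -
  have h: "hform Hm (F i) (F j) = (if i = j then sg k i else 0)" for i j using fr unfolding orthframe_def by blast
  show ?thesis unfolding tri_def using d
    by (simp add: hform_simps h sg_def)
qed

lemma tri_mv:
  assumes "\<forall>i. g *v F i = c *s e i"
  shows "(g :: complex^'n^'n) *v tri F k a b x1 x2 x3 = c *s tri e k a b x1 x2 x3"
  using assms unfolding tri_def by (simp add: mv_add mv_scale vec_eq_iff algebra_simps)

definition rt2 :: complex where "rt2 = complex_of_real (1 / sqrt 2)"

lemma rt2_sq: "rt2 * rt2 = 1/2" "cnj rt2 = rt2"
  unfolding rt2_def by (simp_all flip: of_real_mult)

definition stdv :: "('n \<Rightarrow> complex^'n) \<Rightarrow> 'n \<Rightarrow> 'n \<Rightarrow> 'n \<Rightarrow> complex \<Rightarrow>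
     (complex^'n) \<times> (complex^'n) \<times> (complex^'n)" where
  "stdv e k a b p = (tri e k a b rt2 rt2 0, tri e k a b rt2 (- rt2) 0,
     tri e k a b (rt2 * (1 - cnj p)) (rt2 * (- 1 - cnj p)) (complex_of_real (sqrt (-2 * Re p))))"

definition stdtrip where
  "stdtrip e k a b p = (case stdv e k a b p of (v1, v2, v3) \<Rightarrow> (cline v1, cline v2, cline v3))"

lemma std_h:
  assumes fr: "orthframe Hm k e" and d: "a \<noteq> k" "b \<noteq> k" "a \<noteq> b" and p: "Re p \<le> 0"
    and sv: "stdv e k a b p = (s1, s2, s3)"
  shows "hform Hm s1 s1 = 0" "hform Hm s2 s2 = 0" "hform Hm s3 s3 = 0"
    "hform Hm s1 s2 = -1" "hform Hm s1 s3 = -1" "hform Hm s2 s3 = cnj p"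
    "hform Hm s2 s1 = -1" "hform Hm s3 s1 = -1" "hform Hm s3 s2 = p"
proof -
  define \<sigma> where "\<sigma> = sqrt (-2 * Re p)"
  have \<sigma>: "\<sigma> * \<sigma> = -2 * Re p" using p by (simp add: \<sigma>_def)
  have S: "s1 = tri e k a b rt2 rt2 0" "s2 = tri e k a b rt2 (- rt2) 0"
    "s3 = tri e k a b (rt2 * (1 - cnj p)) (rt2 * (- 1 - cnj p)) (complex_of_real \<sigma>)"
    using sv unfolding stdv_def \<sigma>_def by auto
  note th = tri_h[OF fr d]
  show "hform Hm s1 s1 = 0" "hform Hm s2 s2 = 0"
    "hform Hm s1 s2 = -1" "hform Hm s2 s1 = -1"
    unfolding S th by (simp_all add: rt2_sq)
  have r: "rt2 * rt2 = 1/2" "cnj rt2 = rt2" by (rule rt2_sq)+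
  show "hform Hm s1 s3 = -1" unfolding S th
    by (simp add: r algebra_simps mult.assoc[symmetric])
  show "hform Hm s3 s1 = -1" unfolding S th
    by (simp add: r algebra_simps mult.assoc[symmetric])
  show "hform Hm s2 s3 = cnj p" unfolding S th
    by (simp add: r algebra_simps mult.assoc[symmetric])
  show "hform Hm s3 s2 = p" unfolding S th
    by (simp add: r algebra_simps mult.assoc[symmetric])
  have rm: "cnj (rt2 * z) * (rt2 * w) = 1/2 * (cnj z * w)" for z w
    by (metis r complex_cnj_mult mult.assoc mult.left_commute)
  have rm2: "cnj rt2 * z * (rt2 * w) = 1/2 * (z * w)" for z w
    by (metis r mult.assoc mult.left_commute)
  have "hform Hm s3 s3 = 1/2 * (- (cnj (1 - cnj p) * (1 - cnj p)) + cnj (- 1 - cnj p) * (- 1 - cnj p))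
      + complex_of_real (\<sigma> * \<sigma>)"
    unfolding S th by (simp add: rm rm2)
  also have "\<dots> = 0"
    unfolding \<sigma> by (simp add: complex_eq_iff algebra_simps)
  finally show "hform Hm s3 s3 = 0" .
qed


lemma Xss_intro:
  assumes v: "v1 \<noteq> 0" "v2 \<noteq> 0" "v3 \<noteq> 0"
    and iso: "hform Hm v1 v1 = 0" "hform Hm v2 v2 = 0" "hform Hm v3 v3 = 0"
    and nz: "hform Hm v1 v2 \<noteq> 0" "hform Hm v1 v3 \<noteq> 0" "hform Hm v2 v3 \<noteq> 0"
  shows "(cline v1, cline v2, cline v3) \<in> Xss Hm"
  unfolding Xss_def isotropic_line_def using v iso nz iso_line_neq[of v1 Hm] iso_line_neq[of v2 Hm]
  by blast

lemma Xss_vecs: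
  assumes herm: "hermitian_matrix Hm" and fe: "orthframe Hm k e" and x: "x \<in> Xss Hm"
  shows "\<exists>v1 v2 v3. x = (cline v1, cline v2, cline v3) \<and> v1 \<noteq> 0 \<and> v2 \<noteq> 0 \<and> v3 \<noteq> 0 \<and>
    hform Hm v1 v1 = 0 \<and> hform Hm v2 v2 = 0 \<and> hform Hm v3 v3 = 0 \<and>
    hform Hm v1 v2 \<noteq> 0 \<and> hform Hm v1 v3 \<noteq> 0 \<and> hform Hm v2 v3 \<noteq> 0"
proof -
  obtain L1 L2 L3 where X: "x = (L1, L2, L3)" "isotropic_line Hm L1" "isotropic_line Hm L2"
    "isotropic_line Hm L3" "L1 \<noteq> L2" "L1 \<noteq> L3" "L2 \<noteq> L3"
    using x unfolding Xss_def by auto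
  define v1 where "v1 = gen L1"
  define v2 where "v2 = gen L2"
  define v3 where "v3 = gen L3"
  note g1 = gen_iso[OF X(2), folded v1_def]
  note g2 = gen_iso[OF X(3), folded v2_def]
  note g3 = gen_iso[OF X(4), folded v3_def]
  have nz: "hform Hm v w \<noteq> 0" if T: "v \<noteq> 0" "w \<noteq> 0" "hform Hm v v = 0" "hform Hm w w = 0" "cline v \<noteq> cline w" for v w
  proof
    assume "hform Hm v w = 0"
    then obtain c where c: "w = c *s v" using iso_orth[OF fe herm T(1,3,4)] by blast
    then have "c \<noteq> 0" using T(2) by auto
    then have "cline w = cline v" using c cline_scale by metis
    then show False using T(5) by simp
  qed
  have "hform Hm v1 v2 \<noteq> 0" using nz g1 g2 X(5) by metis
  moreover have "hform Hm v1 v3 \<noteq> 0" using nz g1 g3 X(6) by metis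
  moreover have "hform Hm v2 v3 \<noteq> 0" using nz g2 g3 X(7) by metis
  ultimately show ?thesis using g1 g2 g3 X(1) by metis
qed

lemma pinv_vecs:
  assumes v: "v1 \<noteq> 0" "v2 \<noteq> 0" "v3 \<noteq> 0"
    and iso: "hform Hm v1 v1 = 0" "hform Hm v2 v2 = 0" "hform Hm v3 v3 = 0"
  shows "pinv Hm (cline v1, cline v2, cline v3) = pvec Hm v1 v2 v3"
  by (rule pinv_lines[OF refl]) (use v iso in \<open>auto simp: isotropic_line_def\<close>)

lemma std_Xss:
  assumes herm: "hermitian_matrix Hm" and fr: "orthframe Hm k e" and d: "a \<noteq> k" "b \<noteq> k" "a \<noteq> b"
    and p: "p \<in> Hset"
  shows "stdtrip e k a b p \<in> Xss Hm \<and> pinv Hm (stdtrip e k a b p) = p"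
proof -
  obtain s1 s2 s3 where sv: "stdv e k a b p = (s1, s2, s3)" by (metis prod_cases3)
  have pr: "Re p \<le> 0" "cmod p = 1" using p by (auto simp: Hset_def)
  note h = std_h[OF fr d pr(1) sv]
  have nz: "s1 \<noteq> 0" "s2 \<noteq> 0" "s3 \<noteq> 0" using h(4,6) pr(2) by auto
  have st: "stdtrip e k a b p = (cline s1, cline s2, cline s3)" by (simp add: stdtrip_def sv)
  have "p \<noteq> 0" using pr by auto
  then have "stdtrip e k a b p \<in> Xss Hm" unfolding st by (intro Xss_intro) (use nz h in auto)
  moreover have "pinv Hm (stdtrip e k a b p) = p"
    unfolding st pinv_vecs[OF nz h(1-3)] pvec_def Let_def h using pr(2) by simp
  ultimately show ?thesis by blast
qed

lemma act_lines: "act_triple g (cline v1, cline v2, cline v3) = (cline (g *v v1), cline (g *v v2), cline (g *v v3))"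
  by (simp add: act_triple_def img_cline)

lemma SU_pres: "g \<in> SU_group Hm \<Longrightarrow> hform Hm (g *v v) (g *v w) = hform Hm v w"
  by (simp add: SU_group_def)

lemma act_Xss:
  assumes herm: "hermitian_matrix Hm" and fe: "orthframe Hm k e" and x: "x \<in> Xss Hm"
    and g: "g \<in> SU_group Hm"
  shows "act_triple g x \<in> Xss Hm \<and> pinv Hm (act_triple g x) = pinv Hm x"
proof -
  obtain v1 v2 v3 where V: "x = (cline v1, cline v2, cline v3)" "v1 \<noteq> 0" "v2 \<noteq> 0" "v3 \<noteq> 0"
    "hform Hm v1 v1 = 0" "hform Hm v2 v2 = 0" "hform Hm v3 v3 = 0"
    "hform Hm v1 v2 \<noteq> 0" "hform Hm v1 v3 \<noteq> 0" "hform Hm v2 v3 \<noteq> 0"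
    using Xss_vecs[OF herm fe x] by blast
  note P = SU_pres[OF g]
  have nz: "g *v v1 \<noteq> 0" "g *v v2 \<noteq> 0" "g *v v3 \<noteq> 0"
    using V(8-10) P by (metis hform_zero_left hform_zero_right)+
  have A: "act_triple g x = (cline (g *v v1), cline (g *v v2), cline (g *v v3))"
    by (simp add: V(1) act_lines)
  have iso: "hform Hm (g *v v1) (g *v v1) = 0" "hform Hm (g *v v2) (g *v v2) = 0"
    "hform Hm (g *v v3) (g *v v3) = 0" using V P by simp_all
  show ?thesis unfolding A
    apply (intro conjI Xss_intro)
    using nz V P apply (simp_all add: P)
    unfolding V(1) pinv_vecs[OF V(2-7)] pinv_vecs[OF nz iso] by (simp add: P pvec_def)
qed


lemma hform_uminus_left: "hform Hm (- v) w = - hform Hm v w"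
  unfolding hform_def by (simp add: sum_negf)
lemma hform_uminus_right: "hform Hm v (- w) = - hform Hm v w"
  unfolding hform_def by (simp add: sum_negf)
lemmas hsimps = hform_simps hform_uminus_left hform_uminus_right

lemma rt2_facts: "cnj rt2 * rt2 = 1/2" "rt2 * (rt2 * x) = x / 2" "cnj rt2 * (rt2 * x) = x / 2"
  "cnj rt2 = rt2" "rt2 * rt2 = 1/2"
  using rt2_sq by (auto simp: mult.assoc[symmetric])

lemma NF_norm:
  assumes herm: "hermitian_matrix Hm" and fe: "orthframe Hm k e" and x: "x \<in> Xss Hm"
  shows "\<exists>W1 W2 W3 cc. x = (cline W1, cline W2, cline W3) \<and> W1 \<noteq> 0 \<and> W2 \<noteq> 0 \<and> W3 \<noteq> 0 \<and>
    hform Hm W1 W1 = 0 \<and> hform Hm W2 W2 = 0 \<and> hform Hm W3 W3 = 0 \<and>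
    hform Hm W1 W2 = -1 \<and> hform Hm W1 W3 = -1 \<and> hform Hm W2 W3 = cc \<and> cmod cc = 1"
proof -
  obtain v1 v2 v3 where V: "x = (cline v1, cline v2, cline v3)" "v1 \<noteq> 0" "v2 \<noteq> 0" "v3 \<noteq> 0"
    "hform Hm v1 v1 = 0" "hform Hm v2 v2 = 0" "hform Hm v3 v3 = 0"
    "hform Hm v1 v2 \<noteq> 0" "hform Hm v1 v3 \<noteq> 0" "hform Hm v2 v3 \<noteq> 0"
    using Xss_vecs[OF herm fe x] by blast
  define A where "A = hform Hm v1 v2"
  define B where "B = hform Hm v1 v3"
  define C where "C = hform Hm v2 v3"
  have ABC: "A \<noteq> 0" "B \<noteq> 0" "C \<noteq> 0" using V by (auto simp: A_def B_def C_def)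
  define c' where "c' = C / (cnj A * B)"
  have c': "c' \<noteq> 0" using ABC by (simp add: c'_def)
  define \<rho> where "\<rho> = sqrt (cmod c')"
  have \<rho>: "\<rho> > 0" "\<rho> * \<rho> = cmod c'" using c' by (auto simp: \<rho>_def)
  define W1 where "W1 = complex_of_real \<rho> *s v1"
  define W2 where "W2 = (-1 / (A * complex_of_real \<rho>)) *s v2"
  define W3 where "W3 = (-1 / (B * complex_of_real \<rho>)) *s v3"
  have sc: "complex_of_real \<rho> \<noteq> 0" "-1 / (A * complex_of_real \<rho>) \<noteq> 0" "-1 / (B * complex_of_real \<rho>) \<noteq> 0"
    using \<rho> ABC by auto
  have X: "x = (cline W1, cline W2, cline W3)"
    unfolding V(1) W1_def W2_def W3_def using sc cline_scale by metis
  have nz: "W1 \<noteq> 0" "W2 \<noteq> 0" "W3 \<noteq> 0" using sc V(2-4) by (auto simp: W1_def W2_def W3_def vec_eq_iff)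
  have iso: "hform Hm W1 W1 = 0" "hform Hm W2 W2 = 0" "hform Hm W3 W3 = 0"
    using V(5-7) by (simp_all add: W1_def W2_def W3_def hsimps)
  have h12: "hform Hm W1 W2 = -1" using ABC \<rho> by (simp add: W1_def W2_def hsimps A_def[symmetric])
  have h13: "hform Hm W1 W3 = -1" using ABC \<rho> by (simp add: W1_def W3_def hsimps B_def[symmetric])
  have "hform Hm W2 W3 = C / (cnj A * B * (complex_of_real \<rho> * complex_of_real \<rho>))"
    using ABC \<rho>(1) by (simp add: W2_def W3_def hsimps C_def[symmetric] field_simps)
  also have "\<dots> = c' / complex_of_real (cmod c')" using \<rho>(2) by (simp add: c'_def flip: of_real_mult)
  finally have h23: "hform Hm W2 W3 = c' / complex_of_real (cmod c')" .
  have "cmod (c' / complex_of_real (cmod c')) = 1" using c' by (simp add: norm_divide)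
  then show ?thesis using X nz iso h12 h13 h23 by blast
qed


lemma NF:
  assumes herm: "hermitian_matrix Hm" and fe: "orthframe Hm k e" and d: "a \<noteq> k" "b \<noteq> k" "a \<noteq> b"
    and x: "x \<in> Xss Hm"
  shows "pinv Hm x \<in> Hset \<and> (\<exists>g\<in>SU_group Hm. act_triple g x = stdtrip e k a b (pinv Hm x))"
proof -
  obtain W1 W2 W3 cc where W: "x = (cline W1, cline W2, cline W3)" "W1 \<noteq> 0" "W2 \<noteq> 0" "W3 \<noteq> 0"
    "hform Hm W1 W1 = 0" "hform Hm W2 W2 = 0" "hform Hm W3 W3 = 0"
    "hform Hm W1 W2 = -1" "hform Hm W1 W3 = -1" "hform Hm W2 W3 = cc" "cmod cc = 1"
    using NF_norm[OF herm fe x] by blast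
  have W': "hform Hm W2 W1 = -1" "hform Hm W3 W1 = -1" "hform Hm W3 W2 = cnj cc"
    using W(8-10) hform_herm[OF herm] by (metis complex_cnj_minus complex_cnj_one)+
  have pv: "pinv Hm x = cnj cc"
    unfolding W(1) pinv_vecs[OF W(2-7)] pvec_def Let_def W W' using W(11) by simp
  define p where "p = pinv Hm x"
  have ccp: "cc = cnj p" using pv p_def by simp
  define Fk where "Fk = rt2 *s (W1 + W2)"
  define Fa where "Fa = rt2 *s (W1 - W2)"
  define z where "z = W3 + cc *s W1 - W2"
  note r = rt2_facts
  have hF: "hform Hm Fk Fk = -1" "hform Hm Fa Fa = 1" "hform Hm Fk Fa = 0" "hform Hm Fa Fk = 0"
    unfolding Fk_def Fa_def by (simp_all add: hsimps W W' r)
  have hz1: "hform Hm W1 z = 0" "hform Hm W2 z = 0" unfolding z_def by (simp_all add: hsimps W W')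
  have hz: "hform Hm Fk z = 0" "hform Hm Fa z = 0" unfolding Fk_def Fa_def by (simp_all add: hsimps hz1)
  have hz': "hform Hm z Fk = 0" "hform Hm z Fa = 0" using hz hform_herm[OF herm] by (metis complex_cnj_zero)+
  have hzz: "hform Hm z z = - cc - cnj cc"
  proof -
    have gen: "hform Hm (W3 + cc *s W1 - W2) Z = hform Hm W3 Z + cnj cc * hform Hm W1 Z - hform Hm W2 Z" for Z
      by (simp add: hsimps)
    have "hform Hm z z = hform Hm W3 z + cnj cc * hform Hm W1 z - hform Hm W2 z"
      using gen[of z] by (simp only: z_def[symmetric])
    also have "\<dots> = hform Hm W3 z" by (simp add: hz1)
    also have "\<dots> = - cc - cnj cc" unfolding z_def by (simp add: hsimps W W')
    finally show ?thesis .
  qed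
  have Rez: "Re (hform Hm z z) = - 2 * Re p" by (simp add: hzz ccp)
  have Rep: "Re p \<le> 0"
  proof (cases "z = 0")
    case True then show ?thesis using Rez by simp
  next
    case False then show ?thesis using neg_orth_pos[OF fe herm hF(1) hz(1)] Rez by simp
  qed
  have pH: "p \<in> Hset" using Rep W(11) by (simp add: Hset_def ccp)
  define \<sigma> where "\<sigma> = sqrt (- 2 * Re p)"
  have "\<exists>F. orthframe Hm k F \<and> F k = Fk \<and> F a = Fa \<and> z = complex_of_real \<sigma> *s F b"
  proof (cases "Re p = 0")
    case True
    then have z0: "z = 0" using neg_orth_pos[OF fe herm hF(1) hz(1)] Rez by force
    define F0 where "F0 = (\<lambda>i. if i = k then Fk else Fa)"
    have "\<forall>i\<in>{k,a}. \<forall>j\<in>{k,a}. hform Hm (F0 i) (F0 j) = (if i = j then sg k i else 0)"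
      using d hF by (auto simp: F0_def sg_def)
    then obtain F where F: "\<forall>i\<in>{k,a}. F i = F0 i" "orthframe Hm k F"
      using frame_extend[OF herm fe, of "{k,a}" F0] by blast
    show ?thesis using F d True z0 by (intro exI[of _ F]) (auto simp: F0_def \<sigma>_def)
  next
    case False
    then have \<sigma>: "\<sigma> > 0" "\<sigma> * \<sigma> = - 2 * Re p" using Rep by (auto simp: \<sigma>_def)
    define Fb where "Fb = complex_of_real (1 / \<sigma>) *s z"
    have hb: "hform Hm Fb Fb = 1" "hform Hm Fk Fb = 0" "hform Hm Fa Fb = 0"
      "hform Hm Fb Fk = 0" "hform Hm Fb Fa = 0"
    proof -
      have "hform Hm Fb Fb = complex_of_real (1/(\<sigma> * \<sigma>)) * hform Hm z z"
        by (simp add: Fb_def hsimps)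
      also have "\<dots> = 1" using \<sigma> False by (simp add: complex_eq_iff hzz ccp)
      finally show "hform Hm Fb Fb = 1" .
      show "hform Hm Fk Fb = 0" "hform Hm Fa Fb = 0" "hform Hm Fb Fk = 0" "hform Hm Fb Fa = 0"
        by (simp_all add: Fb_def hsimps hz hz')
    qed
    define F0 where "F0 = (\<lambda>i. if i = k then Fk else if i = a then Fa else Fb)"
    have "\<forall>i\<in>{k,a,b}. \<forall>j\<in>{k,a,b}. hform Hm (F0 i) (F0 j) = (if i = j then sg k i else 0)"
      using d hF hb by (auto simp: F0_def sg_def)
    then obtain F where F: "\<forall>i\<in>{k,a,b}. F i = F0 i" "orthframe Hm k F"
      using frame_extend[OF herm fe, of "{k,a,b}" F0] by blast
    have "z = complex_of_real \<sigma> *s Fb" using \<sigma> by (simp add: Fb_def vec_eq_iff)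
    then show ?thesis using F d by (intro exI[of _ F]) (auto simp: F0_def)
  qed
  then obtain F where F: "orthframe Hm k F" "F k = Fk" "F a = Fa" "z = complex_of_real \<sigma> *s F b"
    by blast
  have T1: "W1 = tri F k a b rt2 rt2 0"
    unfolding tri_def F(2,3) Fk_def Fa_def by (simp add: vec_eq_iff r algebra_simps)
  have T2: "W2 = tri F k a b rt2 (- rt2) 0"
    unfolding tri_def F(2,3) Fk_def Fa_def by (simp add: vec_eq_iff r algebra_simps)
  have "W3 = z - cc *s W1 + W2" by (simp add: z_def)
  also have "\<dots> = tri F k a b (rt2 * (1 - cc)) (rt2 * (- 1 - cc)) (complex_of_real \<sigma>)"
    unfolding F(4) T1 T2 tri_def by (simp add: vec_eq_iff algebra_simps)
  finally have T3: "W3 = tri F k a b (rt2 * (1 - cnj p)) (rt2 * (- 1 - cnj p)) (complex_of_real \<sigma>)"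
    by (simp add: ccp)
  obtain g c where g: "g \<in> SU_group Hm" "c \<noteq> 0" "\<forall>i. g *v F i = c *s e i"
    using SU_from_frame[OF herm fe F(1)] by blast
  have "act_triple g x = stdtrip e k a b p"
    unfolding W(1) act_lines T1 T2 T3 tri_mv[OF g(3)] cline_scale[OF g(2)]
    by (simp add: stdtrip_def stdv_def \<sigma>_def)
  then show ?thesis using pH g(1) p_def by blast
qed


lemma openin_quotient_topology:
  "openin (quotient_topology X f Y) U \<longleftrightarrow> U \<subseteq> Y \<and> openin X {x \<in> topspace X. f x \<in> U}"
proof -
  have A: "S \<inter> T \<subseteq> Y \<and> openin X {x \<in> topspace X. f x \<in> S \<inter> T}"
    if S: "S \<subseteq> Y \<and> openin X {x \<in> topspace X. f x \<in> S}"
      and T: "T \<subseteq> Y \<and> openin X {x \<in> topspace X. f x \<in> T}" for S T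
  proof -
    have "{x \<in> topspace X. f x \<in> S \<inter> T} = {x \<in> topspace X. f x \<in> S} \<inter> {x \<in> topspace X. f x \<in> T}"
      by auto
    then show ?thesis using S T by auto
  qed
  have B: "\<Union>K \<subseteq> Y \<and> openin X {x \<in> topspace X. f x \<in> \<Union>K}"
    if K: "\<forall>S\<in>K. S \<subseteq> Y \<and> openin X {x \<in> topspace X. f x \<in> S}" for K
  proof -
    have "{x \<in> topspace X. f x \<in> \<Union>K} = (\<Union>S\<in>K. {x \<in> topspace X. f x \<in> S})" by auto
    then show ?thesis using K by auto
  qed
  have "istopology (\<lambda>U. U \<subseteq> Y \<and> openin X {x \<in> topspace X. f x \<in> U})"
    unfolding istopology_def using A B by blast
  then show ?thesis unfolding quotient_topology_def by simp
qed

lemma topspace_quotient_topology: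
  assumes "f ` topspace X \<subseteq> Y"
  shows "topspace (quotient_topology X f Y) = Y"
proof -
  have "openin (quotient_topology X f Y) Y"
  proof -
    have "{x \<in> topspace X. f x \<in> Y} = topspace X" using assms by auto
    then show ?thesis unfolding openin_quotient_topology by simp
  qed
  then have "Y \<subseteq> topspace (quotient_topology X f Y)" by (rule openin_subset)
  moreover have "topspace (quotient_topology X f Y) \<subseteq> Y"
    using openin_quotient_topology[of X f Y "topspace (quotient_topology X f Y)"] by simp
  ultimately show ?thesis by blast
qed

lemma topspace_proj_top: "topspace proj_top = proj_space"
  unfolding proj_top_def by (rule topspace_quotient_topology) (auto simp: proj_space_def)

lemma openin_proj_top:
  "openin proj_top U \<longleftrightarrow> U \<subseteq> proj_space \<and> open {v. v \<noteq> 0 \<and> cline v \<in> U}"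
proof -
  have O: "openin (top_of_set (UNIV - {0})) S \<longleftrightarrow> open S" if "S \<subseteq> UNIV - {0}" for S :: "(complex^'n) set"
  proof -
    have "open (UNIV - {0::complex^'n})" by (simp add: open_Diff)
    then show ?thesis using that openin_open_eq by blast
  qed
  moreover have "{x \<in> topspace (top_of_set (UNIV - {0})). cline x \<in> U} = {v. v \<noteq> 0 \<and> cline v \<in> U}"
    by auto
  moreover have "openin (top_of_set (UNIV - {0})) {v. v \<noteq> 0 \<and> cline v \<in> U} \<longleftrightarrow> open {v. v \<noteq> 0 \<and> cline v \<in> U}"
    by (rule O) auto
  ultimately show ?thesis unfolding proj_top_def openin_quotient_topology by simp
qed

lemma cline_cont: "continuous_map (top_of_set (UNIV - {0})) proj_top cline"
  unfolding continuous_map_def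
proof (intro conjI allI impI)
  show "cline \<in> topspace (top_of_set (UNIV - {0})) \<rightarrow> topspace proj_top"
    by (auto simp: topspace_proj_top proj_space_def)
next
  fix U assume "openin proj_top U"
  then show "openin (top_of_set (UNIV - {0})) {x \<in> topspace (top_of_set (UNIV - {0})). cline x \<in> U}"
    unfolding proj_top_def openin_quotient_topology by blast
qed

lemma cont_scale_vec: "continuous_on S (\<lambda>v::complex^'n. c *s v)"
proof -
  have "(\<lambda>v::complex^'n. c *s v) = (\<lambda>v. \<chi> i. c * v $ i)" by (simp add: vec_eq_iff fun_eq_iff)
  moreover have "continuous_on S (\<lambda>v::complex^'n. \<chi> i. c * v $ i)"
    by (intro continuous_on_vec_lambda continuous_intros)
  ultimately show ?thesis by simp
qed

lemma open_cline_image: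
  fixes V :: "(complex^'n) set"
  assumes "open V" "0 \<notin> V"
  shows "openin proj_top (cline ` V)"
  unfolding openin_proj_top
proof
  show "cline ` V \<subseteq> proj_space" using assms(2) by (auto simp: proj_space_def)
  have eq: "{v. v \<noteq> 0 \<and> cline v \<in> cline ` V} = (\<Union>c\<in>{c. c \<noteq> 0}. (\<lambda>w. (1/c) *s w) -` V)"
  proof (intro set_eqI iffI)
    fix v assume "v \<in> {v. v \<noteq> 0 \<and> cline v \<in> cline ` V}"
    then obtain w where w: "w \<in> V" "cline v = cline w" "v \<noteq> 0" by auto
    then obtain c where c: "c \<noteq> 0" "w = c *s v" using cline_eq_iff by blast
    then have "(1 / (1/c)) *s v \<in> V" using w by simp
    then show "v \<in> (\<Union>c\<in>{c. c \<noteq> 0}. (\<lambda>w. (1/c) *s w) -` V)" using c(1) by (intro UN_I[of "1/c"]) auto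
  next
    fix v assume "v \<in> (\<Union>c\<in>{c. c \<noteq> 0}. (\<lambda>w. (1/c) *s w) -` V)"
    then obtain c where c: "c \<noteq> 0" "(1/c) *s v \<in> V" by auto
    then have v: "v \<noteq> 0" using assms(2) by auto
    have "cline v = cline ((1/c) *s v)" using c(1) cline_scale[of "1/c" v] by simp
    then show "v \<in> {v. v \<noteq> 0 \<and> cline v \<in> cline ` V}" using v c(2) by auto
  qed
  show "open {v. v \<noteq> 0 \<and> cline v \<in> cline ` V}"
    unfolding eq
    by (intro open_UN ballI open_vimage assms(1) cont_scale_vec)
qed


lemma cont_hform[continuous_intros]:
  "continuous_on S f \<Longrightarrow> continuous_on S g \<Longrightarrow> continuous_on S (\<lambda>x. hform Hm (f x) (g x))"
  unfolding hform_def by (intro continuous_intros)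

context
  fixes Hm :: "complex^'n^'n" and e :: "'n \<Rightarrow> complex^'n" and k a b :: 'n
  assumes herm: "hermitian_matrix Hm" and fe: "orthframe Hm k e"
    and d: "a \<noteq> k" "b \<noteq> k" "a \<noteq> b"
begin

definition uu :: "(complex^'n) \<times> (complex^'n) \<times> (complex^'n) \<Rightarrow> complex" where
  "uu v = hform Hm (fst v) (snd (snd v)) * hform Hm (snd (snd v)) (fst (snd v)) * hform Hm (fst (snd v)) (fst v)"

lemma cont_uu: "continuous_on S uu"
  unfolding uu_def by (intro continuous_intros)

lemma pinv_open:
  assumes W: "open W"
  shows "openin (Xss_top Hm) {x \<in> Xss Hm. pinv Hm x \<in> W}"
proof -
  define S where "S = {v :: (complex^'n) \<times> (complex^'n) \<times> (complex^'n). fst v \<noteq> 0 \<and> fst (snd v) \<noteq> 0 \<and> snd (snd v) \<noteq> 0 \<and> uu v \<noteq> 0}"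
  have oS: "open S"
    unfolding S_def
    by (intro open_Collect_conj open_Collect_neq continuous_intros cont_uu)
  define E where "E = S \<inter> (\<lambda>v. uu v / complex_of_real (cmod (uu v))) -` W"
  have oE: "open E" unfolding E_def
    by (intro continuous_open_preimage oS W continuous_intros cont_uu) (auto simp: S_def)
  define q where "q = (\<lambda>v::(complex^'n) \<times> (complex^'n) \<times> (complex^'n). (cline (fst v), cline (fst (snd v)), cline (snd (snd v))))"
  define Oq where "Oq = q ` E"
  have oO: "openin (prod_topology proj_top (prod_topology proj_top proj_top)) Oq"
    unfolding openin_prod_topology_alt[of proj_top "prod_topology proj_top proj_top"]
  proof (intro allI impI)
    fix L1 L23 assume "(L1, L23) \<in> Oq"
    then obtain v where v: "v \<in> E" "(L1, L23) = q v" unfolding Oq_def by auto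
    obtain A B where AB: "open A" "open B" "v \<in> A \<times> B" "A \<times> B \<subseteq> E"
      using open_prod_elim[OF oE v(1)] by blast
    obtain A2 A3 where A23: "open A2" "open A3" "snd v \<in> A2 \<times> A3" "A2 \<times> A3 \<subseteq> B"
      using open_prod_elim[OF AB(2)] AB(3) by (metis mem_Times_iff)
    have nz: "fst v \<noteq> 0" "fst (snd v) \<noteq> 0" "snd (snd v) \<noteq> 0" using v(1) by (auto simp: E_def S_def)
    define U where "U = cline ` (A - {0})"
    define V where "V = cline ` (A2 - {0}) \<times> cline ` (A3 - {0})"
    have "openin proj_top U" unfolding U_def by (intro open_cline_image open_Diff AB) auto
    moreover have "openin (prod_topology proj_top proj_top) V" unfolding V_def
      by (intro openin_prod_Times_iff[THEN iffD2] disjI2 conjI open_cline_image open_Diff A23) auto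
    moreover have "L1 \<in> U" "L23 \<in> V" using v(2) AB(3) A23(3) nz
      by (auto simp: q_def U_def V_def mem_Times_iff)
    moreover have "U \<times> V \<subseteq> Oq"
    proof
      fix y assume "y \<in> U \<times> V"
      then obtain w1 w2 w3 where w: "w1 \<in> A - {0}" "w2 \<in> A2 - {0}" "w3 \<in> A3 - {0}"
        "y = (cline w1, cline w2, cline w3)" unfolding U_def V_def by auto
      then have "(w1, w2, w3) \<in> E" using AB(4) A23(4) by auto
      then show "y \<in> Oq" unfolding Oq_def q_def using w(4) by force
    qed
    ultimately show "\<exists>U V. openin proj_top U \<and> openin (prod_topology proj_top proj_top) V \<and> L1 \<in> U \<and> L23 \<in> V \<and> U \<times> V \<subseteq> Oq"
      by blast
  qed
  have "{x \<in> Xss Hm. pinv Hm x \<in> W} = Oq \<inter> Xss Hm"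
  proof (intro set_eqI iffI)
    fix x assume x: "x \<in> {x \<in> Xss Hm. pinv Hm x \<in> W}"
    then obtain v1 v2 v3 where V: "x = (cline v1, cline v2, cline v3)" "v1 \<noteq> 0" "v2 \<noteq> 0" "v3 \<noteq> 0"
      "hform Hm v1 v1 = 0" "hform Hm v2 v2 = 0" "hform Hm v3 v3 = 0"
      "hform Hm v1 v2 \<noteq> 0" "hform Hm v1 v3 \<noteq> 0" "hform Hm v2 v3 \<noteq> 0"
      using Xss_vecs[OF herm fe] by blast
    have "hform Hm v3 v2 \<noteq> 0" "hform Hm v2 v1 \<noteq> 0" using V(8,10) hform_herm[OF herm]
      by (metis complex_cnj_zero)+
    then have "uu (v1, v2, v3) \<noteq> 0" using V by (simp add: uu_def)
    moreover have "pinv Hm x = uu (v1, v2, v3) / complex_of_real (cmod (uu (v1, v2, v3)))"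
      unfolding V(1) pinv_vecs[OF V(2-7)] by (simp add: pvec_def uu_def Let_def)
    ultimately have "(v1, v2, v3) \<in> E" using x V by (simp add: E_def S_def)
    then have "q (v1, v2, v3) \<in> Oq" unfolding Oq_def by (rule imageI)
    then show "x \<in> Oq \<inter> Xss Hm" using x V(1) by (simp add: q_def)
  next
    fix x assume x: "x \<in> Oq \<inter> Xss Hm"
    then obtain w where w: "w \<in> E" "x = q w" by (auto simp: Oq_def)
    obtain w1 w2 w3 where ww: "w = (w1, w2, w3)" by (metis prod_cases3)
    have X: "x = (cline w1, cline w2, cline w3)" using w(2) ww by (simp add: q_def)
    have iso: "isotropic_line Hm (cline w1)" "isotropic_line Hm (cline w2)" "isotropic_line Hm (cline w3)"
      using x X by (auto simp: Xss_def)
    have nz: "w1 \<noteq> 0" "w2 \<noteq> 0" "w3 \<noteq> 0" using w(1) ww by (auto simp: E_def S_def)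
    have "pinv Hm x = uu w / complex_of_real (cmod (uu w))"
      unfolding pinv_lines[OF X iso nz] ww by (simp add: pvec_def uu_def Let_def)
    then show "x \<in> {x \<in> Xss Hm. pinv Hm x \<in> W}" using w(1) x by (auto simp: E_def)
  qed
  then show ?thesis unfolding Xss_top_def openin_subtopology using oO by blast
qed


lemma Xss_sub: "Xss Hm \<subseteq> proj_space \<times> proj_space \<times> proj_space"
  unfolding Xss_def isotropic_line_def proj_space_def by auto

lemma topspace_Xss: "topspace (Xss_top Hm) = Xss Hm"
  using Xss_sub unfolding Xss_top_def by (auto simp: topspace_proj_top)

lemma pinv_Hset: "x \<in> Xss Hm \<Longrightarrow> pinv Hm x \<in> Hset"
  using NF[OF herm fe d] by blast

lemma pinv_cont: "continuous_map (Xss_top Hm) (top_of_set Hset) (pinv Hm)"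
proof (rule continuous_map_into_subtopology)
  show "pinv Hm \<in> topspace (Xss_top Hm) \<rightarrow> Hset" using pinv_Hset topspace_Xss by auto
  show "continuous_map (Xss_top Hm) euclidean (pinv Hm)"
    unfolding continuous_map_def
  proof (intro conjI allI impI)
    show "pinv Hm \<in> topspace (Xss_top Hm) \<rightarrow> topspace euclidean" by simp
    fix U :: "complex set" assume "openin euclidean U"
    then have "open U" by simp
    then show "openin (Xss_top Hm) {x \<in> topspace (Xss_top Hm). pinv Hm x \<in> U}"
      using pinv_open unfolding topspace_Xss by blast
  qed
qed

lemma SU_one: "mat 1 \<in> SU_group Hm"
  by (simp add: SU_group_def)

lemma act_one: "act_triple (mat 1) x = x"
  by (cases x) (simp add: act_triple_def)

lemma act_comp: "act_triple h (act_triple g x) = act_triple (h ** g) x"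
  by (cases x) (simp add: act_triple_def image_image matrix_vector_mul_assoc)

lemma SU_mult: "g \<in> SU_group Hm \<Longrightarrow> h \<in> SU_group Hm \<Longrightarrow> h ** g \<in> SU_group Hm"
  by (simp add: SU_group_def det_mul matrix_vector_mul_assoc[symmetric])

lemma SU_inv: "g \<in> SU_group Hm \<Longrightarrow> \<exists>h\<in>SU_group Hm. h ** g = mat 1"
proof -
  assume g: "g \<in> SU_group Hm"
  then have "det g = 1" by (simp add: SU_group_def)
  then have "invertible g" by (simp add: invertible_det_nz)
  then obtain h where hg: "h ** g = mat 1" using invertible_left_inverse by blast
  then have gh: "g ** h = mat 1" using matrix_left_right_inverse by blast
  have "det h * det g = 1" using hg by (metis det_I det_mul)
  then have "det h = 1" using \<open>det g = 1\<close> by simp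
  moreover have "hform Hm (h *v v) (h *v w) = hform Hm v w" for v w
  proof -
    have "hform Hm (h *v v) (h *v w) = hform Hm (g *v (h *v v)) (g *v (h *v w))"
      using g by (simp add: SU_group_def)
    also have "\<dots> = hform Hm v w" by (simp add: matrix_vector_mul_assoc gh)
    finally show ?thesis .
  qed
  ultimately have "h \<in> SU_group Hm" by (simp add: SU_group_def)
  then show ?thesis using hg by blast
qed

lemma orbit_eq:
  assumes x: "x \<in> Xss Hm"
  shows "orbit Hm x = {y \<in> Xss Hm. pinv Hm y = pinv Hm x}"
proof (intro set_eqI iffI)
  fix y assume "y \<in> orbit Hm x"
  then obtain g where "g \<in> SU_group Hm" "y = act_triple g x" unfolding orbit_def by blast
  then show "y \<in> {y \<in> Xss Hm. pinv Hm y = pinv Hm x}" using act_Xss[OF herm fe x] by blast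
next
  fix y assume y: "y \<in> {y \<in> Xss Hm. pinv Hm y = pinv Hm x}"
  obtain g1 where g1: "g1 \<in> SU_group Hm" "act_triple g1 x = stdtrip e k a b (pinv Hm x)"
    using NF[OF herm fe d x] by blast
  obtain g2 where g2: "g2 \<in> SU_group Hm" "act_triple g2 y = stdtrip e k a b (pinv Hm x)"
  proof -
    have "y \<in> Xss Hm" "pinv Hm y = pinv Hm x" using y by auto
    then show ?thesis using NF[OF herm fe d, of y] that by metis
  qed
  obtain h where h: "h \<in> SU_group Hm" "h ** g2 = mat 1" using SU_inv[OF g2(1)] by blast
  have "act_triple (h ** g1) x = act_triple h (act_triple g2 y)"
    by (simp add: act_comp[symmetric] g1 g2)
  also have "\<dots> = y" by (simp add: act_comp h act_one)
  finally show "y \<in> orbit Hm x" unfolding orbit_def using SU_mult[OF g1(1) h(1)] by blast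
qed

lemma in_orbit: "x \<in> orbit Hm x"
  unfolding orbit_def using SU_one act_one by (metis (mono_tags, lifting) mem_Collect_eq)

lemma orbit_closed:
  assumes x: "x \<in> Xss Hm"
  shows "closedin (Xss_top Hm) (orbit Hm x)"
proof -
  have "closedin (top_of_set Hset) {pinv Hm x}" using pinv_Hset[OF x] by simp
  then have "closedin (Xss_top Hm) {y \<in> topspace (Xss_top Hm). pinv Hm y \<in> {pinv Hm x}}"
    by (rule closedin_continuous_map_preimage[OF pinv_cont])
  then show ?thesis unfolding orbit_eq[OF x] topspace_Xss by simp
qed

lemma closed_orbits_eq: "closed_orbits Hm = orbit Hm ` Xss Hm"
  unfolding closed_orbits_def using orbit_closed by blast

lemma sep_proj_eq:
  assumes x: "x \<in> Xss Hm"
  shows "sep_proj Hm x = orbit Hm x"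
  unfolding sep_proj_def
proof (rule the_equality)
  have cl: "(Xss_top Hm) closure_of (orbit Hm x) = orbit Hm x"
    by (rule closure_of_closedin[OF orbit_closed[OF x]])
  show "orbit Hm x \<in> closed_orbits Hm \<and> orbit Hm x \<subseteq> Xss_top Hm closure_of orbit Hm x"
    using x cl by (simp add: closed_orbits_eq)
  fix C assume C: "C \<in> closed_orbits Hm \<and> C \<subseteq> Xss_top Hm closure_of orbit Hm x"
  then obtain y where y: "y \<in> Xss Hm" "C = orbit Hm y" by (auto simp: closed_orbits_eq)
  then have "y \<in> orbit Hm x" using C cl in_orbit[of y] by blast
  then have "pinv Hm y = pinv Hm x" using orbit_eq[OF x] by auto
  then show "C = orbit Hm x" using y orbit_eq[OF x] orbit_eq[OF y(1)] by simp
qed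

end


lemma cont_smult_const: "continuous_on S c \<Longrightarrow> continuous_on S (\<lambda>p. c p *s (v::complex^'n))"
proof -
  assume c: "continuous_on S c"
  have "(\<lambda>p. c p *s v) = (\<lambda>p. \<chi> i. c p * v $ i)" by (simp add: vec_eq_iff fun_eq_iff)
  moreover have "continuous_on S (\<lambda>p. \<chi> i. c p * v $ i)"
    by (intro continuous_on_vec_lambda continuous_intros c)
  ultimately show ?thesis by metis
qed

lemma cont_tri: "continuous_on S x1 \<Longrightarrow> continuous_on S x2 \<Longrightarrow> continuous_on S x3 \<Longrightarrow>
  continuous_on S (\<lambda>p. tri F k a b (x1 p) (x2 p) (x3 p))"
  unfolding tri_def by (intro continuous_intros cont_smult_const)

lemma cont_cline:
  assumes "continuous_on S f" "\<And>p. p \<in> S \<Longrightarrow> f p \<noteq> 0"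
  shows "continuous_map (top_of_set S) proj_top (\<lambda>p. cline (f p))"
proof -
  have "continuous_map (top_of_set S) (top_of_set (UNIV - {0})) f"
    using assms by (intro continuous_map_into_subtopology) auto
  then have "continuous_map (top_of_set S) proj_top (cline \<circ> f)"
    using cline_cont by (rule continuous_map_compose)
  then show ?thesis by (simp add: o_def)
qed

context
  fixes Hm :: "complex^'n^'n" and e :: "'n \<Rightarrow> complex^'n" and k a b :: 'n
  assumes herm: "hermitian_matrix Hm" and fe: "orthframe Hm k e"
    and d: "a \<noteq> k" "b \<noteq> k" "a \<noteq> b"
begin

lemma std_cont: "continuous_map (top_of_set Hset) (Xss_top Hm) (stdtrip e k a b)"
  unfolding Xss_top_def
proof (rule continuous_map_into_subtopology)
  show "stdtrip e k a b \<in> topspace (top_of_set Hset) \<rightarrow> Xss Hm"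
    using std_Xss[OF herm fe d] by auto
  have S: "stdtrip e k a b = (\<lambda>p. (cline (tri e k a b rt2 rt2 0), cline (tri e k a b rt2 (- rt2) 0),
     cline (tri e k a b (rt2 * (1 - cnj p)) (rt2 * (- 1 - cnj p)) (complex_of_real (sqrt (-2 * Re p))))))"
    by (simp add: fun_eq_iff stdtrip_def stdv_def)
  have nz: "tri e k a b rt2 rt2 0 \<noteq> 0" "tri e k a b rt2 (- rt2) 0 \<noteq> 0"
    "tri e k a b (rt2 * (1 - cnj p)) (rt2 * (- 1 - cnj p)) (complex_of_real (sqrt (-2 * Re p))) \<noteq> 0"
    if p: "p \<in> Hset" for p
  proof -
    have "Re p \<le> 0" using p by (simp add: Hset_def)
    from std_h[OF fe d this, of "tri e k a b rt2 rt2 0" "tri e k a b rt2 (- rt2) 0"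
      "tri e k a b (rt2 * (1 - cnj p)) (rt2 * (- 1 - cnj p)) (complex_of_real (sqrt (-2 * Re p)))"]
    show "tri e k a b rt2 rt2 0 \<noteq> 0" "tri e k a b rt2 (- rt2) 0 \<noteq> 0"
      "tri e k a b (rt2 * (1 - cnj p)) (rt2 * (- 1 - cnj p)) (complex_of_real (sqrt (-2 * Re p))) \<noteq> 0"
      by (auto simp: stdv_def)
  qed
  show "continuous_map (top_of_set Hset) (prod_topology proj_top (prod_topology proj_top proj_top)) (stdtrip e k a b)"
    unfolding S
    by (intro continuous_map_pairedI cont_cline cont_tri continuous_intros nz) auto
qed


lemma main_ctx:
  "\<exists>f. (\<forall>x \<in> Xss Hm. f (sep_proj Hm x) = pinv Hm x)
            \<and> homeomorphic_map (sep_quotient_top Hm) (subtopology euclidean Hset) f"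
proof -
  define f where "f = (\<lambda>C. pinv Hm (SOME x. x \<in> C))"
  have fo: "f (orbit Hm x) = pinv Hm x" if x: "x \<in> Xss Hm" for x
  proof -
    have "(SOME y. y \<in> orbit Hm x) \<in> orbit Hm x" using in_orbit[OF herm fe d, of x] by (rule someI)
    then show ?thesis unfolding f_def using orbit_eq[OF herm fe d x] by auto
  qed
  note sp = sep_proj_eq[OF herm fe d]
  note coe = closed_orbits_eq[OF herm fe d]
  have ts: "topspace (sep_quotient_top Hm) = closed_orbits Hm"
    unfolding sep_quotient_top_def
    by (rule topspace_quotient_topology) (auto simp: topspace_Xss[OF herm fe d] sp coe)
  have oq: "openin (sep_quotient_top Hm) U \<longleftrightarrow> U \<subseteq> closed_orbits Hm \<and> openin (Xss_top Hm) {x \<in> Xss Hm. orbit Hm x \<in> U}" for U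
  proof -
    have "{x \<in> topspace (Xss_top Hm). sep_proj Hm x \<in> U} = {x \<in> Xss Hm. orbit Hm x \<in> U}"
      by (auto simp: topspace_Xss[OF herm fe d] sp)
    then show ?thesis unfolding sep_quotient_top_def openin_quotient_topology by simp
  qed
  have img: "f ` closed_orbits Hm = Hset"
  proof
    show "f ` closed_orbits Hm \<subseteq> Hset" using fo pinv_Hset[OF herm fe d] by (auto simp: coe)
    show "Hset \<subseteq> f ` closed_orbits Hm"
    proof
      fix p assume p: "p \<in> Hset"
      then have "stdtrip e k a b p \<in> Xss Hm" "pinv Hm (stdtrip e k a b p) = p" using std_Xss[OF herm fe d] by auto
      then show "p \<in> f ` closed_orbits Hm" using fo coe by (metis image_eqI)
    qed
  qed
  have inj: "inj_on f (closed_orbits Hm)"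
  proof (rule inj_onI)
    fix C D assume "C \<in> closed_orbits Hm" "D \<in> closed_orbits Hm" "f C = f D"
    then obtain x y where "x \<in> Xss Hm" "y \<in> Xss Hm" "C = orbit Hm x" "D = orbit Hm y" "pinv Hm x = pinv Hm y"
      using fo by (auto simp: coe)
    then show "C = D" using orbit_eq[OF herm fe d] by simp
  qed
  have cont: "continuous_map (sep_quotient_top Hm) (top_of_set Hset) f"
    unfolding continuous_map_def
  proof (intro conjI allI impI)
    show "f \<in> topspace (sep_quotient_top Hm) \<rightarrow> topspace (top_of_set Hset)" using img ts by auto
    fix U assume U: "openin (top_of_set Hset) U"
    have "{x \<in> Xss Hm. orbit Hm x \<in> {C \<in> topspace (sep_quotient_top Hm). f C \<in> U}} =
          {x \<in> topspace (Xss_top Hm). pinv Hm x \<in> U}"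
      by (auto simp: ts coe fo topspace_Xss[OF herm fe d])
    moreover have "openin (Xss_top Hm) {x \<in> topspace (Xss_top Hm). pinv Hm x \<in> U}"
      using openin_continuous_map_preimage[OF pinv_cont[OF herm fe d] U] .
    ultimately show "openin (sep_quotient_top Hm) {C \<in> topspace (sep_quotient_top Hm). f C \<in> U}"
      unfolding oq by (simp add: ts)
  qed
  have om: "open_map (sep_quotient_top Hm) (top_of_set Hset) f"
    unfolding open_map_def
  proof (intro allI impI)
    fix U assume U: "openin (sep_quotient_top Hm) U"
    define Q where "Q = {x \<in> Xss Hm. orbit Hm x \<in> U}"
    have Q: "openin (Xss_top Hm) Q" "U \<subseteq> closed_orbits Hm" using U unfolding oq Q_def by auto
    have "f ` U = {p \<in> topspace (top_of_set Hset). stdtrip e k a b p \<in> Q}"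
    proof (intro set_eqI iffI)
      fix p assume "p \<in> f ` U"
      then obtain x where x: "x \<in> Xss Hm" "orbit Hm x \<in> U" "p = pinv Hm x"
        using Q(2) fo by (auto simp: coe)
      then have pH: "p \<in> Hset" using pinv_Hset[OF herm fe d] by simp
      then have s: "stdtrip e k a b p \<in> Xss Hm" "pinv Hm (stdtrip e k a b p) = p"
        using std_Xss[OF herm fe d] by auto
      then have "orbit Hm (stdtrip e k a b p) = orbit Hm x"
        using x orbit_eq[OF herm fe d] by simp
      then show "p \<in> {p \<in> topspace (top_of_set Hset). stdtrip e k a b p \<in> Q}"
        using s pH x by (simp add: Q_def)
    next
      fix p assume p: "p \<in> {p \<in> topspace (top_of_set Hset). stdtrip e k a b p \<in> Q}"
      then have "p \<in> Hset" "stdtrip e k a b p \<in> Xss Hm" "orbit Hm (stdtrip e k a b p) \<in> U"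
        by (auto simp: Q_def)
      moreover have "pinv Hm (stdtrip e k a b p) = p" using std_Xss[OF herm fe d] \<open>p \<in> Hset\<close> by auto
      ultimately show "p \<in> f ` U" using fo by (metis image_eqI)
    qed
    then show "openin (top_of_set Hset) (f ` U)"
      using openin_continuous_map_preimage[OF std_cont Q(1)] by simp
  qed
  have "homeomorphic_map (sep_quotient_top Hm) (top_of_set Hset) f"
    by (rule bijective_open_imp_homeomorphic_map[OF cont om]) (use img inj ts in auto)
  moreover have "\<forall>x \<in> Xss Hm. f (sep_proj Hm x) = pinv Hm x" using sp fo by simp
  ultimately show ?thesis by blast
qed

end

theorem proposition4p19:
  fixes Hm :: "complex^'n^'n"
  assumes "CARD('n) \<ge> 3"
    and "hermitian_matrix Hm"
    and "signature_n1_1 Hm"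
  shows "\<exists>f. (\<forall>x \<in> Xss Hm. f (sep_proj Hm x) = pinv Hm x)
            \<and> homeomorphic_map (sep_quotient_top Hm) (subtopology euclidean Hset) f"
proof -
  obtain e :: "'n \<Rightarrow> complex^'n" and k where
    ek: "\<forall>i j. hform Hm (e i) (e j) = (if i = j then (if i = k then -1 else 1) else 0)"
    using assms(3) unfolding signature_n1_1_def by blast
  have fe: "orthframe Hm k e" unfolding orthframe_def sg_def using ek by simp
  have "UNIV \<noteq> {k}"
  proof
    assume u: "UNIV = {k}"
    have "CARD('n) = card {k}" using u by (rule arg_cong[where f = card])
    then have "CARD('n) = 1" by simp
    then show False using assms(1) by simp
  qed
  then obtain a where a: "a \<noteq> k" by blast
  have "UNIV \<noteq> {k, a}"
  proof
    assume u: "UNIV = {k, a}"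
    have "CARD('n) = card {k, a}" using u by (rule arg_cong[where f = card])
    also have "\<dots> \<le> 2" by (simp add: card_insert_if)
    finally have "CARD('n) \<le> 2" .
    then show False using assms(1) by simp
  qed
  then obtain b where b: "b \<noteq> k" "b \<noteq> a" by blast
  show ?thesis using main_ctx[OF assms(2) fe a b(1) b(2)[symmetric]] by blast
qed


end
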